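(* Let $G$ be a simple graph, $r\ge 1$ an integer, and $S$ an independent $r$-incident multiset of vertices of $G$. Then there exist an independent $r$-incident multiset $S'$ of vertices of $G$ and an independent set $A\subseteq V(G)$ such that: (i) $\mathrm{supp}(S')$ contains no two vertices that are twins; (ii) $\mathrm{supp}(S')$ contains no vertex of degree $0$ or $1$; (iii) $S'(u)\in\{0,1,\dots,2^{r-1}-1\}$ for every vertex $u$; and $G\star^r S = G\star^1 A\star^r S'$.
   Context: Graphs are finite, simple and undirected; $N_G(u)$ is the set of neighbours of $u$. Two vertices $u,v$ are twins if $N_G(u)\setminus\{v\}=N_G(v)\setminus\{u\}$. A multiset $S$ of vertices is identified with its multiplicity function $S:V(G)\to\mathbb N$; its support is $\mathrm{supp}(S)=\{u: S(u)\ge 1\}$. A set $D$ of vertices is independent if no two vertices of $D$ are adjacent; a multiset is independent if its support is. For an integer $r\ge1$, a multiset $S$ is $r$-incident if for every $k\in\{0,1,\dots,r-1\}$ and every set $K\subseteq V(G)\setminus\mathrm{supp}(S)$ with $|K|=k+2$, the number $\sum_{u\in\bigcap_{v\in K}N_G(v)}S(u)$ is a multiple of $2^{\,r-k-\delta(k)}$, where $\delta(k)=1$ if $k=0$ and $\delta(k)=0$ otherwise. For an independent $r$-incident multiset $S$, the $r$-local complementation $G\star^r S$ is the graph on $V(G)$ in which distinct vertices $a,b$ are adjacent iff exactly one of the following holds: $a\sim_G b$, or $\sum_{u\in N_G(a)\cap N_G(b)}S(u)\equiv 2^{r-1}\pmod{2^r}$. For $r=1$ and an independent set $A=\{u_1,\dots,u_k\}$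 (viewed as a multiset with multiplicities $1$), $G\star^1 A = G\star u_1\star\cdots\star u_k$, where the local complementation $G\star u$ replaces the subgraph induced on $N_G(u)$ by its complement. *)

theory Defs
  imports Main
begin

definition simple_graph :: "'a set \<Rightarrow> ('a \<Rightarrow> 'a \<Rightarrow> bool) \<Rightarrow> bool" where
  "simple_graph V E \<longleftrightarrow> finite V \<and> (\<forall>a b. E a b \<longrightarrow> a \<in> V \<and> b \<in> V)
     \<and> (\<forall>a b. E a b \<longrightarrow> E b a) \<and> (\<forall>a. \<not> E a a)"

definition vmultiset :: "'a set \<Rightarrow> ('a \<Rightarrow> nat) \<Rightarrow> bool" where
  "vmultiset V S \<longleftrightarrow> (\<forall>u. u \<notin> V \<longrightarrow> S u = 0)"

definition nbr :: "'a set \<Rightarrow> ('a \<Rightarrow> 'a \<Rightarrow> bool) \<Rightarrow> 'a \<Rightarrow> 'a set" where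
  "nbr V E u = {v \<in> V. E u v}"

definition supp :: "'a set \<Rightarrow> ('a \<Rightarrow> nat) \<Rightarrow> 'a set" where
  "supp V S = {u \<in> V. S u \<ge> 1}"

definition twins :: "'a set \<Rightarrow> ('a \<Rightarrow> 'a \<Rightarrow> bool) \<Rightarrow> 'a \<Rightarrow> 'a \<Rightarrow> bool" where
  "twins V E u v \<longleftrightarrow> nbr V E u - {v} = nbr V E v - {u}"

definition indep_set :: "('a \<Rightarrow> 'a \<Rightarrow> bool) \<Rightarrow> 'a set \<Rightarrow> bool" where
  "indep_set E D \<longleftrightarrow> (\<forall>u\<in>D. \<forall>v\<in>D. \<not> E u v)"

definition indep_mset :: "'a set \<Rightarrow> ('a \<Rightarrow> 'a \<Rightarrow> bool) \<Rightarrow> ('a \<Rightarrow> nat) \<Rightarrow> bool" where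
  "indep_mset V E S \<longleftrightarrow> indep_set E (supp V S)"

definition delta :: "nat \<Rightarrow> nat" where
  "delta k = (if k = 0 then 1 else 0)"

definition r_incident :: "'a set \<Rightarrow> ('a \<Rightarrow> 'a \<Rightarrow> bool) \<Rightarrow> nat \<Rightarrow> ('a \<Rightarrow> nat) \<Rightarrow> bool" where
  "r_incident V E r S \<longleftrightarrow>
     (\<forall>k < r. \<forall>K. K \<subseteq> V - supp V S \<and> card K = k + 2 \<longrightarrow>
        (2::nat) ^ (r - k - delta k) dvd (\<Sum>u \<in> (\<Inter>v\<in>K. nbr V E v). S u))"

definition rlc :: "'a set \<Rightarrow> ('a \<Rightarrow> 'a \<Rightarrow> bool) \<Rightarrow> nat \<Rightarrow> ('a \<Rightarrow> nat) \<Rightarrow> 'a \<Rightarrow> 'a \<Rightarrow> bool" where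
  "rlc V E r S a b \<longleftrightarrow> a \<in> V \<and> b \<in> V \<and> a \<noteq> b \<and>
     (E a b \<noteq> ((\<Sum>u \<in> nbr V E a \<inter> nbr V E b. S u) mod 2 ^ r = 2 ^ (r - 1)))"

definition lc :: "'a set \<Rightarrow> ('a \<Rightarrow> 'a \<Rightarrow> bool) \<Rightarrow> 'a \<Rightarrow> 'a \<Rightarrow> 'a \<Rightarrow> bool" where
  "lc V E u a b \<longleftrightarrow> a \<in> V \<and> b \<in> V \<and> a \<noteq> b \<and>
     (E a b \<noteq> (a \<in> nbr V E u \<and> b \<in> nbr V E u))"

fun lc_seq :: "'a set \<Rightarrow> ('a \<Rightarrow> 'a \<Rightarrow> bool) \<Rightarrow> 'a list \<Rightarrow> 'a \<Rightarrow> 'a \<Rightarrow> bool" where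
  "lc_seq V E [] = E"
| "lc_seq V E (u # us) = lc_seq V (lc V E u) us"

definition lc1 :: "'a set \<Rightarrow> ('a \<Rightarrow> 'a \<Rightarrow> bool) \<Rightarrow> 'a set \<Rightarrow> 'a \<Rightarrow> 'a \<Rightarrow> bool" where
  "lc1 V E A = lc_seq V E (SOME xs. set xs = A \<and> distinct xs)"

end

theory Submission
  imports Defs
begin

lemma lc_simple:
  assumes "simple_graph V E" shows "simple_graph V (lc V E x)"
  using assms unfolding simple_graph_def lc_def nbr_def by auto

lemma lc_seq_char:
  assumes "simple_graph V E" "indep_set E (set xs)" "distinct xs"
  shows "lc_seq V E xs = (\<lambda>a b. E a b \<noteq> (a \<noteq> b \<and> odd (card {u \<in> set xs. E u a \<and> E u b})))"
  using assms
proof (induction xs arbitrary: E)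
  case Nil
  then show ?case by (auto intro!: ext)
next
  case (Cons x us)
  let ?E1 = "lc V E x"
  have s1: "simple_graph V ?E1" using Cons.prems(1) by (rule lc_simple)
  have nx: "\<not> E x u" if "u \<in> set us" for u using Cons.prems(2) that unfolding indep_set_def by auto
  have eq: "?E1 u a = E u a" if "u \<in> set us" for u a
    using nx[OF that] Cons.prems(1) unfolding lc_def nbr_def simple_graph_def by auto
  have i1: "indep_set ?E1 (set us)" using Cons.prems(2) eq unfolding indep_set_def by auto
  have IH: "lc_seq V ?E1 us = (\<lambda>a b. ?E1 a b \<noteq> (a \<noteq> b \<and> odd (card {u \<in> set us. ?E1 u a \<and> ?E1 u b})))"
    using Cons.IH[OF s1 i1] Cons.prems(3) by auto
  have cardeq: "card {u \<in> set (x#us). E u a \<and> E u b} = card {u\<in>set us. ?E1 u a \<and> ?E1 u b} + (if E x a \<and> E x b then 1 else 0)" for a b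
  proof -
    have "{u \<in> set us. ?E1 u a \<and> ?E1 u b} = {u \<in> set us. E u a \<and> E u b}" using eq by auto
    moreover have "{u \<in> set (x#us). E u a \<and> E u b} = (if E x a \<and> E x b then insert x {u \<in> set us. E u a \<and> E u b} else {u \<in> set us. E u a \<and> E u b})" by auto
    moreover have "x \<notin> set us" using Cons.prems(3) by simp
    ultimately show ?thesis by simp
  qed
  have lcx: "?E1 a b = (E a b \<noteq> (a \<noteq> b \<and> E x a \<and> E x b))" for a b
    using Cons.prems(1) unfolding lc_def nbr_def simple_graph_def by auto
  show ?case
    apply (rule ext)+
    apply (simp only: lc_seq.simps IH lcx cardeq)
    by auto
qed

lemma parity_sum:
  assumes "finite B" shows "odd (\<Sum>u\<in>B. f u) \<longleftrightarrow> odd (card {u\<in>B. odd (f u :: nat)})"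
  using assms
proof (induction B rule: finite_induct)
  case empty then show ?case by simp
next
  case (insert x F)
  have "{u\<in>insert x F. odd (f u)} = (if odd (f x) then insert x {u\<in>F. odd (f u)} else {u\<in>F. odd (f u)})" by auto
  then show ?case using insert by auto
qed

lemma mod_half: "(m::nat) > 0 \<Longrightarrow> (m * x mod (2*m) = m) \<longleftrightarrow> odd x"
  by (simp add: mod_mult_mult1 odd_iff_mod_2_eq_one)

theorem mainTheorem1:
  fixes V :: "'a set" and E :: "'a \<Rightarrow> 'a \<Rightarrow> bool" and r :: nat and S :: "'a \<Rightarrow> nat"
  assumes "simple_graph V E" and "r \<ge> 1"
    and "vmultiset V S" and "indep_mset V E S" and "r_incident V E r S"
  shows "\<exists>S' A. vmultiset V S' \<and> indep_mset V E S' \<and> r_incident V E r S'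
     \<and> A \<subseteq> V \<and> indep_set E A
     \<and> (\<forall>u\<in>supp V S'. \<forall>v\<in>supp V S'. u \<noteq> v \<longrightarrow> \<not> twins V E u v)
     \<and> (\<forall>u\<in>supp V S'. card (nbr V E u) \<ge> 2)
     \<and> (\<forall>u. S' u < 2 ^ (r - 1))
     \<and> rlc V E r S = rlc V (lc1 V E A) r S'"
proof -
  define N where "N = nbr V E"
  have Nn: "nbr V E = N" by (simp add: N_def)
  define P where "P = {u\<in>V. S u \<ge> 1 \<and> card (N u) \<ge> 2}"
  define W where "W = (\<lambda>X. \<Sum>v\<in>{v\<in>P. N v = X}. S v)"
  define R where "R = {u\<in>P. inv_into P N (N u) = u}"
  define m where "m = (2::nat)^(r-1)"
  define S' where "S' = (\<lambda>u. if u \<in> R then W (N u) mod m else 0)"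
  define A where "A = {u\<in>R. odd (W (N u) div m)}"
  have finV: "finite V" and Esym: "\<And>a b. E a b \<Longrightarrow> E b a" and Eirr: "\<And>a. \<not> E a a"
    and EV: "\<And>a b. E a b \<Longrightarrow> a\<in>V \<and> b\<in>V" using assms(1) unfolding simple_graph_def by auto
  have SV: "\<And>u. S u \<noteq> 0 \<Longrightarrow> u \<in> V" using assms(3) unfolding vmultiset_def by auto
  have indS: "\<And>u v. S u \<noteq> 0 \<Longrightarrow> S v \<noteq> 0 \<Longrightarrow> \<not> E u v"
    using assms(4) SV unfolding indep_mset_def indep_set_def supp_def by auto
  have Nmem: "\<And>u v. v \<in> N u \<longleftrightarrow> v \<in> V \<and> E u v" unfolding N_def nbr_def by auto
  have NV: "\<And>u. N u \<subseteq> V" using Nmem by auto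
  have finN: "\<And>u. finite (N u)" using NV finV finite_subset by blast
  have PV: "P \<subseteq> V" and RP: "R \<subseteq> P" unfolding P_def R_def by auto
  have finP: "finite P" using PV finV finite_subset by blast
  have finR: "finite R" using RP finP finite_subset by blast
  have RS: "\<And>u. u \<in> R \<Longrightarrow> S u \<noteq> 0" using RP unfolding P_def by auto
  have mpos: "m > 0" unfolding m_def by simp
  have rm: "(2::nat)^r = 2*m" unfolding m_def using assms(2) by (cases r) auto
  have Rrep: "inv_into P N (N u) \<in> R \<and> N (inv_into P N (N u)) = N u" if "u \<in> P" for u
  proof -
    have i1: "inv_into P N (N u) \<in> P" using that by (simp add: inv_into_into)
    have i2: "N (inv_into P N (N u)) = N u" using that by (simp add: f_inv_into_f)
    show ?thesis using i1 i2 unfolding R_def by simp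
  qed
  have injR: "inj_on N R"
  proof (rule inj_onI)
    fix u v assume uv: "u\<in>R" "v\<in>R" "N u = N v"
    then have "u = inv_into P N (N u)" "v = inv_into P N (N v)" unfolding R_def by auto
    then show "u = v" using uv(3) by simp
  qed
  have imR: "N ` R = N ` P"
  proof
    show "N ` R \<subseteq> N ` P" using RP by auto
    show "N ` P \<subseteq> N ` R" using Rrep by (metis image_eqI image_subsetI)
  qed
  have group: "(\<Sum>u\<in>P. if g (N u) then S u else 0) = (\<Sum>u\<in>R. if g (N u) then W (N u) else 0)" for g
  proof -
    have "(\<Sum>u\<in>P. if g (N u) then S u else 0) = (\<Sum>X\<in>N`P. \<Sum>u\<in>{x\<in>P. N x = X}. if g (N u) then S u else 0)"
      by (rule sum.image_gen[OF finP])
    also have "\<dots> = (\<Sum>X\<in>N`P. if g X then W X else 0)"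
    proof (rule sum.cong)
      fix X assume "X \<in> N ` P"
      have "(\<Sum>u\<in>{x\<in>P. N x = X}. if g (N u) then S u else 0) = (\<Sum>u\<in>{x\<in>P. N x = X}. if g X then S u else 0)"
        by (rule sum.cong) auto
      then show "(\<Sum>u\<in>{x\<in>P. N x = X}. if g (N u) then S u else 0) = (if g X then W X else 0)"
        unfolding W_def by simp
    qed simp
    also have "\<dots> = (\<Sum>u\<in>R. if g (N u) then W (N u) else 0)"
      using sum.reindex[OF injR, of "\<lambda>X. if g X then W X else 0"] imR by simp
    finally show ?thesis .
  qed
  define Q where "Q = (\<lambda>Y. \<Sum>u\<in>R. if Y \<subseteq> N u then W (N u) div m else 0)"
  have key: "(\<Sum>u\<in>(\<Inter>v\<in>Y. N v). S u) = (\<Sum>u\<in>(\<Inter>v\<in>Y. N v). S' u) + m * Q Y"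
    if Y: "Y \<subseteq> V" "2 \<le> card Y" for Y
  proof -
    have Yne: "Y \<noteq> {}" using Y(2) by auto
    have IY: "(\<Inter>v\<in>Y. N v) = {u\<in>V. Y \<subseteq> N u}"
    proof (intro equalityI subsetI)
      fix u assume u: "u \<in> (\<Inter>v\<in>Y. N v)"
      obtain v where "v \<in> Y" using Yne by blast
      then have "u \<in> V" using u by (auto simp: Nmem)
      moreover have "Y \<subseteq> N u"
      proof
        fix w assume w: "w \<in> Y"
        then have "E w u" using u by (auto simp: Nmem)
        then show "w \<in> N u" using Esym w Y(1) by (auto simp: Nmem)
      qed
      ultimately show "u \<in> {u\<in>V. Y \<subseteq> N u}" by simp
    next
      fix u assume u: "u \<in> {u\<in>V. Y \<subseteq> N u}"
      show "u \<in> (\<Inter>v\<in>Y. N v)"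
      proof
        fix w assume w: "w \<in> Y"
        then have "E u w" using u by (auto simp: Nmem)
        then show "u \<in> N w" using Esym u by (auto simp: Nmem)
      qed
    qed
    have finI: "finite {u\<in>V. Y \<subseteq> N u}" using finV by simp
    have sumS: "(\<Sum>u\<in>{u\<in>V. Y \<subseteq> N u}. S u) = (\<Sum>u\<in>P. if Y \<subseteq> N u then S u else 0)"
    proof -
      have "(\<Sum>u\<in>P. if Y \<subseteq> N u then S u else 0) = (\<Sum>u\<in>{u\<in>P. Y\<subseteq>N u}. S u)"
        by (simp add: sum.inter_filter[OF finP])
      also have "\<dots> = (\<Sum>u\<in>{u\<in>V. Y \<subseteq> N u}. S u)"
      proof (rule sum.mono_neutral_left[OF finI])
        show "{u \<in> P. Y \<subseteq> N u} \<subseteq> {u \<in> V. Y \<subseteq> N u}" using PV by auto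
        show "\<forall>i\<in>{u \<in> V. Y \<subseteq> N u} - {u \<in> P. Y \<subseteq> N u}. S i = 0"
        proof
          fix i assume i: "i \<in> {u \<in> V. Y \<subseteq> N u} - {u \<in> P. Y \<subseteq> N u}"
          have "card Y \<le> card (N i)" using i finN card_mono by blast
          then show "S i = 0" using i Y(2) unfolding P_def by auto
        qed
      qed
      finally show ?thesis by simp
    qed
    have sumS': "(\<Sum>u\<in>{u\<in>V. Y \<subseteq> N u}. S' u) = (\<Sum>u\<in>R. if Y \<subseteq> N u then S' u else 0)"
    proof -
      have "(\<Sum>u\<in>R. if Y \<subseteq> N u then S' u else 0) = (\<Sum>u\<in>{u\<in>R. Y\<subseteq>N u}. S' u)"
        by (simp add: sum.inter_filter[OF finR])
      also have "\<dots> = (\<Sum>u\<in>{u\<in>V. Y \<subseteq> N u}. S' u)"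
        by (rule sum.mono_neutral_left[OF finI]) (use RP PV in \<open>auto simp: S'_def\<close>)
      finally show ?thesis by simp
    qed
    have split: "(if Y \<subseteq> N u then W (N u) else 0) = (if Y \<subseteq> N u then S' u else 0) + m * (if Y \<subseteq> N u then W (N u) div m else 0)"
      if "u \<in> R" for u using that by (simp add: S'_def mod_mult_div_eq)
    have "(\<Sum>u\<in>R. if Y \<subseteq> N u then W (N u) else 0) = (\<Sum>u\<in>R. if Y \<subseteq> N u then S' u else 0) + m * Q Y"
      unfolding Q_def sum_distrib_left sum.distrib[symmetric] by (rule sum.cong) (auto simp: split)
    then show ?thesis unfolding IY sumS sumS' group .
  qed
  have S'R: "\<And>u. S' u \<noteq> 0 \<Longrightarrow> u \<in> R" unfolding S'_def by (auto split: if_splits)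
  have suppS': "supp V S' \<subseteq> R" unfolding supp_def using S'R by force
  have RV: "R \<subseteq> V" using RP PV by auto
  have AR: "A \<subseteq> R" unfolding A_def by auto
  have finA: "finite A" using AR finR finite_subset by blast
  have c1: "vmultiset V S'" unfolding vmultiset_def using S'R RV by auto
  have c2: "indep_mset V E S'" unfolding indep_mset_def indep_set_def
    using suppS' RS indS by blast
  have c3: "r_incident V E r S'" unfolding r_incident_def Nn
  proof (intro allI impI)
    fix k K assume k: "k < r" and K: "K \<subseteq> V - supp V S' \<and> card K = k + 2"
    have dv: "2 ^ (r - k - delta k) dvd m" unfolding m_def
      by (rule le_imp_power_dvd) (auto simp: delta_def)
    show "2 ^ (r - k - delta k) dvd (\<Sum>u\<in>(\<Inter>v\<in>K. N v). S' u)"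
    proof (cases "\<exists>w\<in>K. S w \<noteq> 0")
      case True
      then obtain w where w: "w \<in> K" "S w \<noteq> 0" by blast
      have "\<forall>u\<in>(\<Inter>v\<in>K. N v). S' u = 0"
      proof
        fix u assume "u \<in> (\<Inter>v\<in>K. N v)"
        then have "E w u" using w Nmem by blast
        then show "S' u = 0" using S'R RS indS w(2) by blast
      qed
      then show ?thesis by simp
    next
      case False
      then have "K \<subseteq> V - supp V S" using K unfolding supp_def by auto
      then have "2 ^ (r - k - delta k) dvd (\<Sum>u\<in>(\<Inter>v\<in>K. N v). S u)"
        using assms(5) k K unfolding r_incident_def Nn by blast
      moreover have "2 \<le> card K" using K by simp
      ultimately have "2 ^ (r - k - delta k) dvd (\<Sum>u\<in>(\<Inter>v\<in>K. N v). S' u) + m * Q K"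
        using key[of K] K by (metis Diff_subset subset_trans)
      moreover have "2 ^ (r - k - delta k) dvd m * Q K" using dv by simp
      ultimately show ?thesis using dvd_add_left_iff by blast
    qed
  qed
  have c4: "A \<subseteq> V" using AR RV by auto
  have c5: "indep_set E A" unfolding indep_set_def using AR RS indS by blast
  have c6: "\<forall>u\<in>supp V S'. \<forall>v\<in>supp V S'. u \<noteq> v \<longrightarrow> \<not> twins V E u v"
  proof (intro ballI impI notI)
    fix u v assume u: "u \<in> supp V S'" and v: "v \<in> supp V S'" and uv: "u \<noteq> v" and tw: "twins V E u v"
    have uR: "u \<in> R" and vR: "v \<in> R" using u v suppS' by auto
    have "\<not> E u v" "\<not> E v u" using uR vR RS indS by blast+
    then have "v \<notin> N u" "u \<notin> N v" using Nmem by auto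
    then have "N u = N v" using tw unfolding twins_def Nn by blast
    moreover have "u = inv_into P N (N u)" "v = inv_into P N (N v)" using uR vR unfolding R_def by auto
    ultimately show False using uv by simp
  qed
  have c7: "\<forall>u\<in>supp V S'. card (nbr V E u) \<ge> 2" using suppS' RP unfolding P_def Nn by auto
  have c8: "\<forall>u. S' u < 2 ^ (r - 1)" using mpos unfolding S'_def m_def[symmetric] by simp
  obtain xs where xs: "set xs = A" "distinct xs"
    using finite_distinct_list[OF finA] by blast
  have lc1eq: "lc1 V E A = (\<lambda>a b. E a b \<noteq> (a \<noteq> b \<and> odd (card {u \<in> A. E u a \<and> E u b})))"
  proof -
    let ?xs = "SOME xs. set xs = A \<and> distinct xs"
    have h: "set ?xs = A \<and> distinct ?xs" using someI_ex[of "\<lambda>xs. set xs = A \<and> distinct xs"] xs by blast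
    show ?thesis unfolding lc1_def using lc_seq_char[OF assms(1), of ?xs] h c5 by simp
  qed
  define E' where "E' = lc1 V E A"
  have E'R: "E' a u = E a u" if "u \<in> R" for a u
  proof -
    have "{w \<in> A. E w a \<and> E w u} = {}" using that AR RS indS by blast
    moreover have "E' a u = (E a u \<noteq> (a \<noteq> u \<and> odd (card {w \<in> A. E w a \<and> E w u})))"
      unfolding E'_def lc1eq by (rule refl)
    ultimately show ?thesis by (simp only: card.empty) simp
  qed
  have c9: "rlc V E r S = rlc V E' r S'"
  proof (intro ext)
    fix a b
    show "rlc V E r S a b = rlc V E' r S' a b"
    proof (cases "a \<in> V \<and> b \<in> V \<and> a \<noteq> b")
      case False then show ?thesis unfolding rlc_def by auto
    next
      case True
      then have ab: "a \<in> V" "b \<in> V" "a \<noteq> b" by auto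
      have Iab: "(\<Inter>v\<in>{a,b}. N v) = N a \<inter> N b" by simp
      define \<sigma> where "\<sigma> = (\<Sum>u\<in>N a \<inter> N b. S u)"
      define \<sigma>' where "\<sigma>' = (\<Sum>u\<in>N a \<inter> N b. S' u)"
      have ksum: "\<sigma> = \<sigma>' + m * Q {a,b}" using key[of "{a,b}"] ab unfolding Iab \<sigma>_def \<sigma>'_def by simp
      have mdv: "m dvd \<sigma>"
      proof (cases "S a \<noteq> 0 \<or> S b \<noteq> 0")
        case True
        have "\<forall>u\<in>N a \<inter> N b. S u = 0" using True indS Nmem by blast
        then show ?thesis unfolding \<sigma>_def by simp
      next
        case False
        then have "{a,b} \<subseteq> V - supp V S" "card {a,b} = 0 + 2" using ab unfolding supp_def by auto
        moreover have h: "\<And>k K. k<r \<Longrightarrow> K \<subseteq> V - supp V S \<Longrightarrow> card K = k+2 \<Longrightarrow> 2^(r-k-delta k) dvd (\<Sum>u\<in>(\<Inter>v\<in>K. nbr V E v). S u)"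
          using assms(5) unfolding r_incident_def by blast
        moreover have "0 < r" using assms(2) by simp
        ultimately have "2 ^ (r - 0 - delta 0) dvd (\<Sum>u\<in>(\<Inter>v\<in>{a,b}. nbr V E v). S u)"
          by blast
        then show ?thesis unfolding \<sigma>_def m_def Nn Iab by (simp add: delta_def)
      qed
      then obtain x where x: "\<sigma> = m * x" by blast
      have "m dvd \<sigma>'" using mdv ksum by (metis dvd_add_left_iff dvd_triv_left)
      then obtain y where y: "\<sigma>' = m * y" by blast
      have xy: "x = y + Q {a,b}" using x y ksum mpos by (simp add: distrib_left[symmetric])
      have sigE': "(\<Sum>u\<in>nbr V E' a \<inter> nbr V E' b. S' u) = \<sigma>'"
      proof -
        have fin1: "finite (nbr V E' a \<inter> nbr V E' b)" using finV unfolding nbr_def by simp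
        have fin2: "finite (N a \<inter> N b)" using finN by simp
        have eqs: "nbr V E' a \<inter> nbr V E' b \<inter> R = N a \<inter> N b \<inter> R"
          using E'R unfolding Nn[symmetric] nbr_def by auto
        have S'if: "S' = (\<lambda>u. if u \<in> R then S' u else 0)" unfolding S'_def by (auto intro!: ext)
        have "(\<Sum>u\<in>nbr V E' a \<inter> nbr V E' b. S' u) = (\<Sum>u\<in>nbr V E' a \<inter> nbr V E' b \<inter> R. S' u)"
          by (subst S'if) (simp add: sum.inter_restrict[OF fin1])
        also have "\<dots> = (\<Sum>u\<in>N a \<inter> N b \<inter> R. S' u)" using eqs by simp
        also have "\<dots> = \<sigma>'" unfolding \<sigma>'_def
          by (subst (2) S'if) (simp add: sum.inter_restrict[OF fin2])
        finally show ?thesis .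
      qed
      have par: "odd (card {u \<in> A. E u a \<and> E u b}) \<longleftrightarrow> odd (Q {a,b})"
      proof -
        have "Q {a,b} = (\<Sum>u\<in>{u\<in>R. {a,b} \<subseteq> N u}. W (N u) div m)"
          unfolding Q_def by (simp add: sum.inter_filter[OF finR])
        then have "odd (Q {a,b}) \<longleftrightarrow> odd (card {u\<in>{u\<in>R. {a,b} \<subseteq> N u}. odd (W (N u) div m)})"
          using parity_sum[of "{u\<in>R. {a,b} \<subseteq> N u}" "\<lambda>u. W (N u) div m"] finR by simp
        moreover have "{u\<in>{u\<in>R. {a,b} \<subseteq> N u}. odd (W (N u) div m)} = {u \<in> A. E u a \<and> E u b}"
          unfolding A_def using ab Nmem by auto
        ultimately show ?thesis by simp
      qed
      have lhs: "rlc V E r S a b \<longleftrightarrow> (E a b \<noteq> odd x)"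
        unfolding rlc_def Nn using ab mod_half[OF mpos, of x] x rm unfolding \<sigma>_def m_def by simp
      have rhs: "rlc V E' r S' a b \<longleftrightarrow> (E' a b \<noteq> odd y)"
        unfolding rlc_def using ab mod_half[OF mpos, of y] y rm sigE' unfolding m_def by simp
      have e': "E' a b = (E a b \<noteq> odd (card {u \<in> A. E u a \<and> E u b}))"
        unfolding E'_def lc1eq using ab by simp
      show ?thesis unfolding lhs rhs e' par xy by auto
    qed
  qed
  show ?thesis
    apply (rule exI[of _ S'], rule exI[of _ A])
    using c1 c2 c3 c4 c5 c6 c7 c8 c9 unfolding E'_def by blast
qed

end
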